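(* Let $G$ be a connected graph with at least two vertices and let $\sigma=(v_1,\dots,v_n)$ be a layered search ordering of $G$. If the $\mathcal{F}$-tree of $\sigma$ has at most $k$ leaves, then the bandwidth of $\sigma$ is at most $2k-1$.
   Context: All graphs are finite, simple, undirected, connected and non-empty. A search ordering of $G$ is an ordering $(v_1,\dots,v_n)$ of $V(G)$ such that every $v_i$ with $i>1$ has a neighbor among $v_1,\dots,v_{i-1}$. A layered search ordering is a search ordering in which the distance $d_G(v_1,v_i)$ is non-decreasing in $i$ (the distance layers of the start vertex are traversed in increasing order). The $\mathcal{F}$-tree (first-in tree) of a search ordering $\sigma=(v_1,\dots,v_n)$ is the spanning tree rooted at $v_1$ in which the parent of each $v_i$, $i>1$, is the neighbor of $v_i$ that appears leftmost in $\sigma$. A leaf of a rooted tree is a non-root vertex without children (the root is never counted as a leaf, even if it has degree 1). The bandwidth of an ordering $\sigma=(v_1,\dots,v_n)$ is $\max_{v_iv_j\in E(G)}|i-j|$. *)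

theory Defs
  imports Main
begin

definition sgraph :: "'a set \<Rightarrow> ('a \<Rightarrow> 'a \<Rightarrow> bool) \<Rightarrow> bool" where
  "sgraph V E \<longleftrightarrow> finite V \<and> V \<noteq> {} \<and>
     (\<forall>x y. E x y \<longrightarrow> x \<in> V \<and> y \<in> V \<and> x \<noteq> y \<and> E y x)"

definition walk :: "('a \<Rightarrow> 'a \<Rightarrow> bool) \<Rightarrow> 'a list \<Rightarrow> bool" where
  "walk E xs \<longleftrightarrow> xs \<noteq> [] \<and> (\<forall>i. Suc i < length xs \<longrightarrow> E (xs ! i) (xs ! Suc i))"

definition connected_graph :: "'a set \<Rightarrow> ('a \<Rightarrow> 'a \<Rightarrow> bool) \<Rightarrow> bool" where
  "connected_graph V E \<longleftrightarrow>
     (\<forall>u\<in>V. \<forall>v\<in>V. \<exists>xs. walk E xs \<and> hd xs = u \<and> last xs = v)"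

definition gdist :: "('a \<Rightarrow> 'a \<Rightarrow> bool) \<Rightarrow> 'a \<Rightarrow> 'a \<Rightarrow> nat" where
  "gdist E u v = (LEAST n. \<exists>xs. walk E xs \<and> hd xs = u \<and> last xs = v \<and> length xs = Suc n)"

(* search ordering (v_1,...,v_n) as a list, 0-indexed *)
definition search_ordering :: "'a set \<Rightarrow> ('a \<Rightarrow> 'a \<Rightarrow> bool) \<Rightarrow> 'a list \<Rightarrow> bool" where
  "search_ordering V E \<sigma> \<longleftrightarrow> distinct \<sigma> \<and> set \<sigma> = V \<and>
     (\<forall>i. 0 < i \<and> i < length \<sigma> \<longrightarrow> (\<exists>j<i. E (\<sigma> ! i) (\<sigma> ! j)))"

definition layered_search_ordering :: "'a set \<Rightarrow> ('a \<Rightarrow> 'a \<Rightarrow> bool) \<Rightarrow> 'a list \<Rightarrow> bool" where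
  "layered_search_ordering V E \<sigma> \<longleftrightarrow> search_ordering V E \<sigma> \<and>
     (\<forall>i j. i \<le> j \<and> j < length \<sigma> \<longrightarrow> gdist E (\<sigma> ! 0) (\<sigma> ! i) \<le> gdist E (\<sigma> ! 0) (\<sigma> ! j))"

(* F-tree: position of the parent of the vertex at position i > 0 = leftmost neighbour *)
definition ftree_parent :: "('a \<Rightarrow> 'a \<Rightarrow> bool) \<Rightarrow> 'a list \<Rightarrow> nat \<Rightarrow> nat" where
  "ftree_parent E \<sigma> i = (LEAST j. E (\<sigma> ! i) (\<sigma> ! j))"

definition ftree_leaves :: "('a \<Rightarrow> 'a \<Rightarrow> bool) \<Rightarrow> 'a list \<Rightarrow> 'a set" where
  "ftree_leaves E \<sigma> = {\<sigma> ! i | i. 0 < i \<and> i < length \<sigma> \<and>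
      \<not> (\<exists>l. 0 < l \<and> l < length \<sigma> \<and> ftree_parent E \<sigma> l = i)}"

definition bandwidth :: "('a \<Rightarrow> 'a \<Rightarrow> bool) \<Rightarrow> 'a list \<Rightarrow> nat" where
  "bandwidth E \<sigma> = Max ({0} \<union> {nat \<bar>int i - int j\<bar> | i j.
      i < length \<sigma> \<and> j < length \<sigma> \<and> E (\<sigma> ! i) (\<sigma> ! j)})"

end

theory Submission
  imports Defs
begin

lemma walk_snoc:
  assumes "walk E xs" "E (last xs) y" shows "walk E (xs @ [y])"
  unfolding walk_def
proof (intro conjI allI impI)
  fix i assume i: "Suc i < length (xs @ [y])"
  show "E ((xs @ [y]) ! i) ((xs @ [y]) ! Suc i)"
  proof (cases "Suc i < length xs")
    case True thus ?thesis using assms(1) by (simp add: walk_def nth_append)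
  next
    case False
    hence "i = length xs - 1" "xs \<noteq> []" using i assms(1) by (auto simp: walk_def)
    thus ?thesis using assms(2) by (simp add: nth_append last_conv_nth)
  qed
qed simp

lemma walk_butlast:
  assumes "walk E xs" "length xs \<ge> 2" shows "walk E (butlast xs)"
  using assms unfolding walk_def
  by (auto simp: nth_butlast) (metis length_butlast butlast.simps(1) list.size(3) numeral_le_iff semiring_norm(69) zero_neq_numeral Suc_1 not_less_eq_eq diff_is_0_eq length_0_conv)

lemma gdist_walk:
  assumes "connected_graph V E" "u \<in> V" "v \<in> V"
  shows "\<exists>xs. walk E xs \<and> hd xs = u \<and> last xs = v \<and> length xs = Suc (gdist E u v)"
proof -
  obtain xs where xs: "walk E xs" "hd xs = u" "last xs = v"
    using assms unfolding connected_graph_def by blast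
  hence "\<exists>n xs. walk E xs \<and> hd xs = u \<and> last xs = v \<and> length xs = Suc n"
    by (intro exI[of _ "length xs - 1"] exI[of _ xs]) (auto simp: walk_def)
  from LeastI_ex[OF this] show ?thesis unfolding gdist_def .
qed

lemma gdist_le:
  assumes "walk E xs" "hd xs = u" "last xs = v" "length xs = Suc m"
  shows "gdist E u v \<le> m"
  unfolding gdist_def by (rule Least_le) (use assms in blast)

lemma gdist_self: "gdist E u u = 0"
  using gdist_le[of E "[u]" u u 0] by (simp add: walk_def)

lemma gdist_zero:
  assumes "connected_graph V E" "u \<in> V" "v \<in> V" "gdist E u v = 0"
  shows "v = u"
  using gdist_walk[OF assms(1-3)] assms(4)
  by (metis One_nat_def hd_conv_nth last_conv_nth length_0_conv nat.distinct(1) diff_Suc_1)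

lemma gdist_edge:
  assumes "connected_graph V E" "u \<in> V" "x \<in> V" "E x y"
  shows "gdist E u y \<le> Suc (gdist E u x)"
proof -
  obtain xs where xs: "walk E xs" "hd xs = u" "last xs = x" "length xs = Suc (gdist E u x)"
    using gdist_walk[OF assms(1-3)] by blast
  have "walk E (xs @ [y])" using walk_snoc[OF xs(1)] xs(3) assms(4) by simp
  moreover have "hd (xs @ [y]) = u" using xs by (cases xs) auto
  ultimately show ?thesis using gdist_le[of E "xs @ [y]" u y] xs(4) by simp
qed

lemma walk_prefix:
  assumes "walk E (xs @ ys)" "xs \<noteq> []" shows "walk E xs"
  unfolding walk_def
proof (intro conjI allI impI)
  fix i assume i: "Suc i < length xs"
  have "E ((xs @ ys) ! i) ((xs @ ys) ! Suc i)" using assms(1) i unfolding walk_def by simp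
  thus "E (xs ! i) (xs ! Suc i)" using i by (simp add: nth_append)
qed (rule assms(2))

lemma gdist_pred:
  assumes "connected_graph V E" "u \<in> V" "x \<in> V" "x \<noteq> u"
  shows "\<exists>y. E y x \<and> gdist E u y < gdist E u x"
proof -
  obtain g where g: "g = gdist E u x" by blast
  obtain xs where xs: "walk E xs" "hd xs = u" "last xs = x" "length xs = Suc g"
    using gdist_walk[OF assms(1-3)] g by blast
  have "g \<noteq> 0" using gdist_zero[OF assms(1-3)] assms(4) g by blast
  then obtain h where hg: "g = Suc h" by (cases g) auto
  obtain ys y where ys: "xs = ys @ [y]" using xs(4) by (metis append_butlast_last_id list.size(3) nat.distinct(1))
  have y: "y = x" using xs(3) ys by simp
  have lys: "length ys = Suc h" using xs(4) ys hg by simp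
  then obtain zs z where zs: "ys = zs @ [z]" by (metis append_butlast_last_id list.size(3) nat.distinct(1))
  have lzs: "length zs = h" using lys zs by simp
  have "E (xs ! h) (xs ! Suc h)" using xs(1) xs(4) hg unfolding walk_def by simp
  moreover have "xs ! h = z" using ys zs lzs by (simp add: nth_append)
  moreover have "xs ! Suc h = y" using ys lys by (simp add: nth_append)
  ultimately have Ezx: "E z x" using y by simp
  have wys: "walk E ys" using xs(1) ys lys walk_prefix by (metis list.size(3) nat.distinct(1))
  have "hd ys = u" using xs(2) ys lys by (cases ys) auto
  hence "gdist E u z \<le> h" using gdist_le[OF wys _ _ lys] zs by simp
  thus ?thesis using Ezx g hg by auto
qed
theorem corollary3p2:
  fixes V :: "'a set" and E :: "'a \<Rightarrow> 'a \<Rightarrow> bool" and \<sigma> :: "'a list" and k :: nat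
  assumes "sgraph V E" and "connected_graph V E" and "card V \<ge> 2"
    and "layered_search_ordering V E \<sigma>"
    and "card (ftree_leaves E \<sigma>) \<le> k"
  shows "bandwidth E \<sigma> \<le> 2 * k - 1"
proof -
  define n where "n = length \<sigma>"
  have so: "search_ordering V E \<sigma>" using assms(4) unfolding layered_search_ordering_def by blast
  have dist: "distinct \<sigma>" and setV: "set \<sigma> = V" using so unfolding search_ordering_def by auto
  have nV: "n = card V" using distinct_card[OF dist] setV n_def by simp
  hence n2: "n \<ge> 2" using assms(3) by simp
  define r where "r = \<sigma> ! 0"
  have rV: "r \<in> V" using setV n2 n_def r_def by (metis nth_mem less_le_trans zero_less_numeral)
  have inV: "\<And>i. i < n \<Longrightarrow> \<sigma> ! i \<in> V" using setV n_def by auto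
  have sym: "\<And>x y. E x y \<Longrightarrow> E y x" and irr: "\<And>x. \<not> E x x" and EV: "\<And>x y. E x y \<Longrightarrow> y \<in> V"
    using assms(1) unfolding sgraph_def by blast+
  define D where "D i = gdist E r (\<sigma> ! i)" for i
  have mono: "\<And>i j. i \<le> j \<Longrightarrow> j < n \<Longrightarrow> D i \<le> D j"
    using assms(4) unfolding layered_search_ordering_def D_def r_def n_def by blast
  have D0: "D 0 = 0" unfolding D_def r_def by (rule gdist_self)
  have Dz: "\<And>i. i < n \<Longrightarrow> D i = 0 \<Longrightarrow> i = 0"
  proof -
    fix i assume i: "i < n" "D i = 0"
    hence "\<sigma> ! i = \<sigma> ! 0" using gdist_zero[OF assms(2) rV inV[OF i(1)]] D_def r_def by simp
    moreover have "0 < n" using n2 by simp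
    ultimately show "i = 0" using dist i(1) n_def nth_eq_iff_index_eq by metis
  qed
  have edge: "\<And>i j. i < n \<Longrightarrow> E (\<sigma> ! i) (\<sigma> ! j) \<Longrightarrow> D j \<le> Suc (D i)"
    unfolding D_def using gdist_edge[OF assms(2) rV] inV by blast
  define p where "p i = ftree_parent E \<sigma> i" for i
  have par: "\<And>i. 0 < i \<Longrightarrow> i < n \<Longrightarrow> p i < i \<and> E (\<sigma> ! i) (\<sigma> ! (p i)) \<and> D i = Suc (D (p i))"
  proof -
    fix i assume i: "0 < i" "i < n"
    have "\<sigma> ! i \<noteq> r" using dist i n_def r_def nth_eq_iff_index_eq by (metis less_trans neq0_conv)
    then obtain y where y: "E y (\<sigma> ! i)" "gdist E r y < D i"
      using gdist_pred[OF assms(2) rV inV[OF i(2)]] unfolding D_def by blast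
    have "y \<in> set \<sigma>" using EV[OF sym[OF y(1)]] setV by simp
    then obtain j where j: "j < n" "\<sigma> ! j = y" using n_def by (metis in_set_conv_nth)
    have ji: "j < i"
    proof (rule ccontr)
      assume "\<not> j < i" hence "D i \<le> D j" using mono j(1) by simp
      thus False using y(2) j(2) D_def by simp
    qed
    have Eij: "E (\<sigma> ! i) (\<sigma> ! j)" using sym[OF y(1)] j(2) by simp
    have pj: "p i \<le> j" unfolding p_def ftree_parent_def by (rule Least_le) (rule Eij)
    have Ep: "E (\<sigma> ! i) (\<sigma> ! (p i))" unfolding p_def ftree_parent_def by (rule LeastI) (rule Eij)
    have "D (p i) \<le> D j" using mono pj j(1) by simp
    moreover have "D i \<le> Suc (D (p i))" using edge[OF _ sym[OF Ep]] pj j(1) by simp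
    ultimately show "p i < i \<and> E (\<sigma> ! i) (\<sigma> ! (p i)) \<and> D i = Suc (D (p i))"
      using pj ji Ep y(2) j(2) D_def by simp
  qed
  define leafidx where "leafidx = {i. 0 < i \<and> i < n \<and> \<not> (\<exists>l. 0 < l \<and> l < n \<and> p l = i)}"
  have finL: "finite leafidx" unfolding leafidx_def by auto
  have leaves_eq: "ftree_leaves E \<sigma> = (\<lambda>i. \<sigma> ! i) ` leafidx"
    unfolding ftree_leaves_def leafidx_def p_def n_def by auto
  have injL: "inj_on (\<lambda>i. \<sigma> ! i) leafidx"
    using dist unfolding leafidx_def n_def by (auto simp: inj_on_def nth_eq_iff_index_eq)
  hence cardK: "card leafidx \<le> k" using assms(5) leaves_eq card_image[OF injL] by simp
  have lastleaf: "n - 1 \<in> leafidx"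
  proof -
    have "\<not> (0 < l \<and> l < n \<and> p l = n - 1)" for l
    proof
      assume l: "0 < l \<and> l < n \<and> p l = n - 1"
      hence "p l < l" using par by blast
      thus False using l by linarith
    qed
    thus ?thesis unfolding leafidx_def using n2 by auto
  qed
  hence "leafidx \<noteq> {}" by blast
  hence K1: "card leafidx \<ge> 1" using finL by (simp add: Suc_le_eq card_gt_0_iff)
  have layer: "card {i. i < n \<and> D i = d} \<le> card leafidx" for d
  proof (cases "d = 0")
    case True
    have "{i. i < n \<and> D i = d} \<subseteq> {0}" using Dz True by auto
    hence "card {i. i < n \<and> D i = d} \<le> card {0::nat}" by (intro card_mono) auto
    thus ?thesis using K1 by simp
  next
    case False
    define anc where "anc x = (p ^^ (D x - d)) x" for x
    define S where "S i = {x. x < n \<and> d \<le> D x \<and> anc x = i}" for i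
    define g where "g i = Max (S i)" for i
    define L where "L = {i. i < n \<and> D i = d}"
    have finS: "finite (S i)" for i unfolding S_def by auto
    have gS: "g i \<in> S i" if "i \<in> L" for i
    proof -
      have "i \<in> S i" using that unfolding S_def L_def anc_def by simp
      moreover have "finite (S i)" unfolding S_def by auto
      ultimately show ?thesis unfolding g_def using Max_in by blast
    qed
    have "g ` L \<subseteq> leafidx"
    proof
      fix m assume "m \<in> g ` L"
      then obtain i where i: "i \<in> L" "m = g i" by blast
      have mS: "m \<in> S i" using gS[OF i(1)] i(2) by simp
      hence m: "m < n" "d \<le> D m" "anc m = i" unfolding S_def by auto
      have m0: "0 < m" using m(2) False D0 by (metis le_zero_eq neq0_conv)
      have "\<not> (0 < l \<and> l < n \<and> p l = m)" for l
      proof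
        assume l: "0 < l \<and> l < n \<and> p l = m"
        have pl: "p l < l" "D l = Suc (D m)" using par[of l] l by auto
        have "anc l = (p ^^ (D m - d)) (p l)" unfolding anc_def using pl(2) m(2)
          by (simp add: Suc_diff_le funpow_Suc_right del: funpow.simps)
        hence "anc l = i" using l m(3) unfolding anc_def by simp
        hence "l \<in> S i" using l pl m(2) unfolding S_def by simp
        hence "l \<le> Max (S i)" by (rule Max_ge[OF finS])
        hence "l \<le> m" using i(2) unfolding g_def by simp
        thus False using pl(1) l by simp
      qed
      thus "m \<in> leafidx" unfolding leafidx_def using m0 m(1) by blast
    qed
    moreover have injg: "inj_on g L"
    proof (rule inj_onI)
      fix i j assume ij: "i \<in> L" "j \<in> L" "g i = g j"
      have "anc (g i) = i" "anc (g j) = j" using gS[OF ij(1)] gS[OF ij(2)] unfolding S_def by auto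
      thus "i = j" using ij(3) by metis
    qed
    ultimately have "card L \<le> card leafidx" using card_inj_on_le[OF injg _ finL] by blast
    thus ?thesis unfolding L_def .
  qed
  have bnd: "nat \<bar>int i - int j\<bar> \<le> 2 * k - 1" if ij: "i < n" "j < n" "E (\<sigma> ! i) (\<sigma> ! j)" for i j
  proof -
    have key: "b - a \<le> 2 * k - 1" if ab: "a < b" "b < n" "E (\<sigma> ! a) (\<sigma> ! b)" for a b
    proof -
      have "D b \<le> Suc (D a)" using edge ab by simp
      have "{a..b} \<subseteq> {m. m < n \<and> D m = D a} \<union> {m. m < n \<and> D m = Suc (D a)}"
      proof
        fix m assume "m \<in> {a..b}"
        hence "a \<le> m" "m \<le> b" by auto
        hence "D a \<le> D m" "D m \<le> D b" "m < n" using mono ab(2) by auto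
        thus "m \<in> {m. m < n \<and> D m = D a} \<union> {m. m < n \<and> D m = Suc (D a)}"
          using \<open>D b \<le> Suc (D a)\<close> by auto
      qed
      hence "card {a..b} \<le> card ({m. m < n \<and> D m = D a} \<union> {m. m < n \<and> D m = Suc (D a)})"
        by (intro card_mono) auto
      also have "\<dots> \<le> card {m. m < n \<and> D m = D a} + card {m. m < n \<and> D m = Suc (D a)}"
        by (rule card_Un_le)
      also have "\<dots> \<le> 2 * k" using layer[of "D a"] layer[of "Suc (D a)"] cardK by simp
      finally show ?thesis using ab(1) by simp
    qed
    have "i \<noteq> j" using irr ij(3) by auto
    hence "i < j \<or> j < i" by auto
    thus ?thesis
    proof
      assume "i < j" thus ?thesis using key[of i j] ij by simp
    next
      assume "j < i" thus ?thesis using key[of j i] ij sym by simp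
    qed
  qed
  have fin: "finite {nat \<bar>int i - int j\<bar> | i j. i < length \<sigma> \<and> j < length \<sigma> \<and> E (\<sigma> ! i) (\<sigma> ! j)}"
  proof -
    have "{nat \<bar>int i - int j\<bar> | i j. i < length \<sigma> \<and> j < length \<sigma> \<and> E (\<sigma> ! i) (\<sigma> ! j)}
       \<subseteq> (\<lambda>(i, j). nat \<bar>int i - int j\<bar>) ` ({..<length \<sigma>} \<times> {..<length \<sigma>})" by auto
    thus ?thesis by (rule finite_subset) auto
  qed
  show ?thesis unfolding bandwidth_def
    using fin bnd n_def by (subst Max_le_iff) auto
qed

end
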